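(* Consider an $\mathsf n$-qubit system in which CNOT (and SWAP) gates can be applied only to pairs of qubits forming edges of a given connected undirected simple graph on the qubits. Then for any non-identity $\mathsf n$-qubit Pauli operator $P$ and any $\theta\in\mathbb R$, the unitary $e^{\mathrm i\frac\theta2P}$ can be implemented using one single-qubit rotation $e^{\mathrm i\frac\theta2\sigma^x}$, at most $2\mathsf n$ single-qubit Hadamard and Phase gates, and at most $2\mathsf n-2$ CNOT and SWAP gates (each on an edge of the graph).
   Context: A non-identity $\mathsf n$-qubit Pauli operator is a tensor product of $\mathbf 1_2,\sigma^x,\sigma^y,\sigma^z$ other than the identity. *)

theory Defs
  imports Complex_Main "Jordan_Normal_Form.Matrix"
begin

definition mat_exp :: "complex mat \<Rightarrow> complex mat" where
  "mat_exp A = mat (dim_row A) (dim_col A)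
      (\<lambda>(i,j). \<Sum>k. (A ^\<^sub>m k) $$ (i,j) / of_nat (fact k))"

datatype pauli = PI | PX | PY | PZ

fun pauli_entry :: "pauli \<Rightarrow> nat \<Rightarrow> nat \<Rightarrow> complex" where
  "pauli_entry PI i j = (if i = j then 1 else 0)"
| "pauli_entry PX i j = (if i \<noteq> j then 1 else 0)"
| "pauli_entry PY i j = (if i = 0 \<and> j = 1 then - \<i> else if i = 1 \<and> j = 0 then \<i> else 0)"
| "pauli_entry PZ i j = (if i = j then (if i = 0 then 1 else -1) else 0)"

definition pauli1 :: "pauli \<Rightarrow> complex mat" where
  "pauli1 s = mat 2 2 (\<lambda>(i,j). pauli_entry s i j)"

(* bit i of basis index a: computational basis state |b_0 ... b_{n-1}> has index sum b_i 2^i *)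
definition bit :: "nat \<Rightarrow> nat \<Rightarrow> nat" where
  "bit a i = a div 2 ^ i mod 2"

definition pauli_mat :: "pauli list \<Rightarrow> complex mat" where
  "pauli_mat ps = mat (2 ^ length ps) (2 ^ length ps)
     (\<lambda>(a,b). \<Prod>i<length ps. pauli_entry (ps ! i) (bit a i) (bit b i))"

definition non_identity_pauli :: "pauli list \<Rightarrow> bool" where
  "non_identity_pauli ps \<longleftrightarrow> (\<exists>i<length ps. ps ! i \<noteq> PI)"

definition embed1 :: "nat \<Rightarrow> nat \<Rightarrow> complex mat \<Rightarrow> complex mat" where
  "embed1 n q U = mat (2 ^ n) (2 ^ n)
     (\<lambda>(a,b). if (\<forall>i<n. i \<noteq> q \<longrightarrow> bit a i = bit b i) then U $$ (bit a q, bit b q) else 0)"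

definition perm_mat :: "nat \<Rightarrow> ((nat \<Rightarrow> nat) \<Rightarrow> nat \<Rightarrow> nat) \<Rightarrow> complex mat" where
  "perm_mat n f = mat (2 ^ n) (2 ^ n)
     (\<lambda>(a,b). if (\<forall>i<n. bit a i = f (bit b) i) then 1 else 0)"

definition hadamard :: "complex mat" where
  "hadamard = mat 2 2 (\<lambda>(i,j). if i = 1 \<and> j = 1 then - 1 / sqrt 2 else 1 / sqrt 2)"

definition phase_S :: "complex mat" where
  "phase_S = mat 2 2 (\<lambda>(i,j). if i = j then (if i = 0 then 1 else \<i>) else 0)"

definition phase_Sdg :: "complex mat" where
  "phase_Sdg = mat 2 2 (\<lambda>(i,j). if i = j then (if i = 0 then 1 else - \<i>) else 0)"

definition rot_x :: "real \<Rightarrow> complex mat" where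
  "rot_x \<theta> = mat_exp ((\<i> * complex_of_real (\<theta> / 2)) \<cdot>\<^sub>m pauli1 PX)"

datatype gate =
    Rx real nat
  | H nat
  | S nat
  | Sdg nat
  | CNOT nat nat     (* control, target *)
  | SWAP nat nat

fun gate_mat :: "nat \<Rightarrow> gate \<Rightarrow> complex mat" where
  "gate_mat n (Rx \<theta> q) = embed1 n q (rot_x \<theta>)"
| "gate_mat n (H q) = embed1 n q hadamard"
| "gate_mat n (S q) = embed1 n q phase_S"
| "gate_mat n (Sdg q) = embed1 n q phase_Sdg"
| "gate_mat n (CNOT c t) =
     perm_mat n (\<lambda>x i. if i = t then (x t + x c) mod 2 else x i)"
| "gate_mat n (SWAP c t) =
     perm_mat n (\<lambda>x i. x (if i = c then t else if i = t then c else i))"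

(* circuit [g1,...,gk] applies g1 first: unitary gk * ... * g1 *)
fun circ_mat :: "nat \<Rightarrow> gate list \<Rightarrow> complex mat" where
  "circ_mat n [] = 1\<^sub>m (2 ^ n)"
| "circ_mat n (g # gs) = circ_mat n gs * gate_mat n g"

fun is_Rx :: "gate \<Rightarrow> bool" where
  "is_Rx (Rx _ _) = True" | "is_Rx _ = False"

fun is_HS :: "gate \<Rightarrow> bool" where
  "is_HS (H _) = True" | "is_HS (S _) = True" | "is_HS (Sdg _) = True" | "is_HS _ = False"

fun is_2q :: "gate \<Rightarrow> bool" where
  "is_2q (CNOT _ _) = True" | "is_2q (SWAP _ _) = True" | "is_2q _ = False"

fun gate_ok :: "nat \<Rightarrow> (nat \<Rightarrow> nat \<Rightarrow> bool) \<Rightarrow> gate \<Rightarrow> bool" where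
  "gate_ok n E (Rx _ q) = (q < n)"
| "gate_ok n E (H q) = (q < n)"
| "gate_ok n E (S q) = (q < n)"
| "gate_ok n E (Sdg q) = (q < n)"
| "gate_ok n E (CNOT c t) = (c < n \<and> t < n \<and> E c t)"
| "gate_ok n E (SWAP c t) = (c < n \<and> t < n \<and> E c t)"

definition connected_simple_graph :: "nat \<Rightarrow> (nat \<Rightarrow> nat \<Rightarrow> bool) \<Rightarrow> bool" where
  "connected_simple_graph n E \<longleftrightarrow>
     (\<forall>x y. E x y \<longrightarrow> x < n \<and> y < n) \<and>
     (\<forall>x y. E x y \<longrightarrow> E y x) \<and> (\<forall>x. \<not> E x x) \<and>
     (\<forall>x<n. \<forall>y<n. E\<^sup>*\<^sup>* x y)"

end

theory Submission
  imports Defs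
begin

lemma bit_lt2: "Defs.bit a i < 2"
  by (simp add: Defs.bit_def)

lemma bit_01: "Defs.bit a i = 0 \<or> Defs.bit a i = 1"
  using bit_lt2[of a i] by linarith

lemma bit_shift0: "t < 2 \<Longrightarrow> Defs.bit (t + 2 * c) 0 = t"
  by (simp add: Defs.bit_def)

lemma bit_shiftS: "t < 2 \<Longrightarrow> Defs.bit (t + 2 * c) (Suc i) = Defs.bit c i"
proof -
  assume t: "t < 2"
  have "(t + 2 * c) div 2 ^ Suc i = ((t + 2 * c) div 2) div 2 ^ i"
    by (simp add: div_mult2_eq)
  also have "(t + 2 * c) div 2 = c" using t by simp
  finally show ?thesis by (simp add: Defs.bit_def)
qed

lemma bit_Suc: "Defs.bit a (Suc i) = Defs.bit (a div 2) i"
  by (simp add: Defs.bit_def div_mult2_eq)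

lemma bit_0: "Defs.bit a 0 = a mod 2"
  by (simp add: Defs.bit_def)

lemma bit_ext: "a < 2 ^ n \<Longrightarrow> b < 2 ^ n \<Longrightarrow> (\<forall>i<n. Defs.bit a i = Defs.bit b i) \<Longrightarrow> a = b"
proof (induction n arbitrary: a b)
  case 0 then show ?case by simp
next
  case (Suc n)
  have "a div 2 = b div 2"
    apply (rule Suc.IH)
    using Suc.prems by (auto simp: bit_Suc)
  moreover have "a mod 2 = b mod 2" using Suc.prems(3)[rule_format, of 0] by (simp add: bit_0)
  ultimately show ?case by (metis div_mult_mod_eq)
qed

lemma bit_exists: "\<forall>i<n. y i < (2::nat) \<Longrightarrow> \<exists>c<2^n. \<forall>i<n. Defs.bit c i = y i"
proof (induction n arbitrary: y)
  case 0 then show ?case by simp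
next
  case (Suc n)
  obtain c where c: "c < 2^n" "\<forall>i<n. Defs.bit c i = y (Suc i)"
    using Suc.IH[of "\<lambda>i. y (Suc i)"] Suc.prems by auto
  have y0: "y 0 < 2" using Suc.prems by auto
  show ?case
  proof (intro exI conjI allI impI)
    show "y 0 + 2 * c < 2 ^ Suc n" using c(1) y0 by simp
    fix i assume "i < Suc n"
    then show "Defs.bit (y 0 + 2 * c) i = y i"
      using c(2) y0 by (cases i) (auto simp: bit_shift0 bit_shiftS)
  qed
qed

lemma sum_split2: "(\<Sum>c<2*m. k c) = (\<Sum>c<m. k (2*c) + k (2*c+1))"
  for k :: "nat \<Rightarrow> 'a::comm_monoid_add"
  by (induction m) (auto simp: add.assoc)

lemma sum_prod_bits:
  "(\<Sum>c<2^n. \<Prod>i<n. h i (Defs.bit c i)) = (\<Prod>i<n. \<Sum>t<2. h i t)"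
  for h :: "nat \<Rightarrow> nat \<Rightarrow> 'a::comm_semiring_1"
proof (induction n arbitrary: h)
  case 0 then show ?case by simp
next
  case (Suc n)
  have "(\<Sum>c<2^Suc n. \<Prod>i<Suc n. h i (Defs.bit c i))
      = (\<Sum>c<2^n. (\<Prod>i<Suc n. h i (Defs.bit (0 + 2*c) i)) + (\<Prod>i<Suc n. h i (Defs.bit (1 + 2*c) i)))"
    by (simp add: sum_split2 add.commute)
  also have "\<dots> = (\<Sum>c<2^n. h 0 0 * (\<Prod>i<n. h (Suc i) (Defs.bit c i)) + h 0 1 * (\<Prod>i<n. h (Suc i) (Defs.bit c i)))"
  proof (rule sum.cong[OF refl])
    fix c
    have "(\<Prod>i<Suc n. h i (Defs.bit (t + 2*c) i)) = h 0 t * (\<Prod>i<n. h (Suc i) (Defs.bit c i))" if "t < 2" for t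
      by (simp only: prod.lessThan_Suc_shift bit_shift0[OF that] bit_shiftS[OF that])
    note that = this
    show "(\<Prod>i<Suc n. h i (Defs.bit (0 + 2*c) i)) + (\<Prod>i<Suc n. h i (Defs.bit (1 + 2*c) i))
       = h 0 0 * (\<Prod>i<n. h (Suc i) (Defs.bit c i)) + h 0 1 * (\<Prod>i<n. h (Suc i) (Defs.bit c i))"
      using that[of 0] that[of 1] by (simp only: zero_less_numeral one_less_numeral_iff semiring_norm(76))
  qed
  also have "\<dots> = (h 0 0 + h 0 1) * (\<Sum>c<2^n. \<Prod>i<n. h (Suc i) (Defs.bit c i))"
    by (simp add: sum_distrib_left distrib_right sum.distrib)
  also have "\<dots> = (h 0 0 + h 0 1) * (\<Prod>i<n. \<Sum>t<2. h (Suc i) t)"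
    using Suc.IH[of "\<lambda>i. h (Suc i)"] by simp
  also have "\<dots> = (\<Prod>i<Suc n. \<Sum>t<2. h i t)"
    by (simp only: prod.lessThan_Suc_shift[of "\<lambda>i. \<Sum>t<2. h i t"]) (simp add: numeral_2_eq_2)
  finally show ?case .
qed

lemma prod_indic: "(\<Prod>i<(n::nat). if P i then (1::'a::comm_semiring_1) else 0) = (if \<forall>i<n. P i then 1 else 0)"
  by (induction n) (auto simp: less_Suc_eq)

definition prodmat :: "nat \<Rightarrow> (nat \<Rightarrow> complex mat) \<Rightarrow> complex mat" where
  "prodmat n F = mat (2^n) (2^n) (\<lambda>(a,b). \<Prod>i<n. F i $$ (Defs.bit a i, Defs.bit b i))"

lemma prodmat_carrier[simp]: "prodmat n F \<in> carrier_mat (2^n) (2^n)"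
  by (simp add: prodmat_def)

lemma mult22: "A \<in> carrier_mat 2 2 \<Longrightarrow> B \<in> carrier_mat 2 2 \<Longrightarrow> x < 2 \<Longrightarrow> y < 2 \<Longrightarrow>
  (A * B) $$ (x, y) = (\<Sum>t<2. A $$ (x,t) * B $$ (t,y))"
  by (simp add: scalar_prod_def atLeast0LessThan[symmetric] mult.commute)

lemma prodmat_mult:
  assumes "\<And>i. i < n \<Longrightarrow> F i \<in> carrier_mat 2 2" "\<And>i. i < n \<Longrightarrow> G i \<in> carrier_mat 2 2"
  shows "prodmat n F * prodmat n G = prodmat n (\<lambda>i. F i * G i)"
proof (rule eq_matI)
  fix a b assume ab: "a < dim_row (prodmat n (\<lambda>i. F i * G i))" "b < dim_col (prodmat n (\<lambda>i. F i * G i))"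
  then have a: "a < 2^n" and b: "b < 2^n" by (auto simp: prodmat_def)
  have "(prodmat n F * prodmat n G) $$ (a,b) = (\<Sum>c<2^n. (\<Prod>i<n. F i $$ (Defs.bit a i, Defs.bit c i)) * (\<Prod>i<n. G i $$ (Defs.bit c i, Defs.bit b i)))"
    using a b by (simp add: prodmat_def scalar_prod_def atLeast0LessThan[symmetric])
  also have "\<dots> = (\<Sum>c<2^n. \<Prod>i<n. F i $$ (Defs.bit a i, Defs.bit c i) * G i $$ (Defs.bit c i, Defs.bit b i))"
    by (simp add: prod.distrib)
  also have "\<dots> = (\<Prod>i<n. \<Sum>t<2. F i $$ (Defs.bit a i, t) * G i $$ (t, Defs.bit b i))"
    by (rule sum_prod_bits)
  also have "\<dots> = (\<Prod>i<n. (F i * G i) $$ (Defs.bit a i, Defs.bit b i))"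
    by (rule prod.cong, simp, subst mult22, use assms bit_lt2 in auto)
  also have "\<dots> = prodmat n (\<lambda>i. F i * G i) $$ (a,b)" using a b by (simp add: prodmat_def)
  finally show "(prodmat n F * prodmat n G) $$ (a,b) = prodmat n (\<lambda>i. F i * G i) $$ (a,b)" .
qed (auto simp: prodmat_def)

lemma prodmat_cong: "(\<And>i. i < n \<Longrightarrow> F i = G i) \<Longrightarrow> prodmat n F = prodmat n G"
  unfolding prodmat_def by (intro eq_matI) auto

lemma prodmat_one: "prodmat n (\<lambda>_. 1\<^sub>m 2) = 1\<^sub>m (2^n)"
proof (rule eq_matI)
  fix a b assume "a < dim_row (1\<^sub>m (2 ^ n) :: complex mat)" "b < dim_col (1\<^sub>m (2 ^ n) :: complex mat)"
  then have a: "a < 2^n" and b: "b < 2^n" by auto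
  have "prodmat n (\<lambda>_. 1\<^sub>m 2) $$ (a,b) = (\<Prod>i<n. if Defs.bit a i = Defs.bit b i then 1 else 0)"
    using a b bit_lt2 by (simp add: prodmat_def)
  also have "\<dots> = (if a = b then 1 else 0)"
    by (simp add: prod_indic) (use bit_ext a b in blast)
  finally show "prodmat n (\<lambda>_. 1\<^sub>m 2) $$ (a,b) = (1\<^sub>m (2^n) :: complex mat) $$ (a,b)" using a b by simp
qed (auto simp: prodmat_def)

definition pstr :: "nat \<Rightarrow> (nat \<Rightarrow> pauli) \<Rightarrow> complex mat" where
  "pstr n f = mat (2 ^ n) (2 ^ n) (\<lambda>(a,b). \<Prod>i<n. pauli_entry (f i) (Defs.bit a i) (Defs.bit b i))"

lemma pauli_mat_pstr: "pauli_mat ps = pstr (length ps) (\<lambda>i. ps ! i)"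
  by (simp add: pauli_mat_def pstr_def)

lemma pauli1_carrier[simp]: "pauli1 s \<in> carrier_mat 2 2"
  by (simp add: pauli1_def)

lemma pstr_prodmat: "pstr n f = prodmat n (\<lambda>i. pauli1 (f i))"
  unfolding pstr_def prodmat_def pauli1_def
  by (rule eq_matI) (auto simp: bit_lt2)

lemma pstr_carrier[simp]: "pstr n f \<in> carrier_mat (2^n) (2^n)"
  by (simp add: pstr_def)

lemma pstr_cong: "(\<And>i. i < n \<Longrightarrow> f i = g i) \<Longrightarrow> pstr n f = pstr n g"
  unfolding pstr_prodmat by (rule prodmat_cong) simp

lemma prod_indic_set: "finite A \<Longrightarrow> (\<Prod>i\<in>A. if P i then (1::'a::comm_semiring_1) else 0) = (if \<forall>i\<in>A. P i then 1 else 0)"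
  by (induction A rule: finite_induct) auto

lemma embed1_prodmat_gen:
  assumes q: "q < n" and Fq: "F q = U" and F1: "\<And>i. i \<noteq> q \<Longrightarrow> F i = 1\<^sub>m 2"
  shows "embed1 n q U = prodmat n F"
proof (rule eq_matI)
  fix a b assume "a < dim_row (prodmat n F)" "b < dim_col (prodmat n F)"
  then have a: "a < 2^n" and b: "b < 2^n" by (auto simp: prodmat_def)
  have "prodmat n F $$ (a,b) = (\<Prod>i<n. F i $$ (Defs.bit a i, Defs.bit b i))"
    using a b by (simp add: prodmat_def)
  also have "\<dots> = U $$ (Defs.bit a q, Defs.bit b q) * (\<Prod>i\<in>{..<n} - {q}. F i $$ (Defs.bit a i, Defs.bit b i))"
    using q Fq by (subst prod.remove[of _ q]) auto
  also have "(\<Prod>i\<in>{..<n} - {q}. F i $$ (Defs.bit a i, Defs.bit b i))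
     = (\<Prod>i\<in>{..<n} - {q}. if Defs.bit a i = Defs.bit b i then 1 else 0)"
    by (rule prod.cong) (auto simp: bit_lt2 F1)
  also have "\<dots> = (if \<forall>i\<in>{..<n} - {q}. Defs.bit a i = Defs.bit b i then 1 else 0)"
    by (simp add: prod_indic_set)
  finally have P: "prodmat n F $$ (a,b) = U $$ (Defs.bit a q, Defs.bit b q) * (if \<forall>i\<in>{..<n} - {q}. Defs.bit a i = Defs.bit b i then 1 else 0)" .
  show "embed1 n q U $$ (a,b) = prodmat n F $$ (a,b)"
    unfolding P using a b by (auto simp: embed1_def)
qed (auto simp: embed1_def prodmat_def)

lemma embed1_prodmat:
  assumes q: "q < n"
  shows "embed1 n q U = prodmat n ((\<lambda>_. 1\<^sub>m 2)(q := U))"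
  by (rule embed1_prodmat_gen[OF q]) auto

lemma embed1_carrier[simp]: "embed1 n q U \<in> carrier_mat (2^n) (2^n)"
  by (simp add: embed1_def)

lemma perm_carrier[simp]: "perm_mat n f \<in> carrier_mat (2^n) (2^n)"
  by (simp add: perm_mat_def)

lemma gate_carrier[simp]: "gate_mat n g \<in> carrier_mat (2^n) (2^n)"
  by (cases g) auto

lemma circ_carrier[simp]: "circ_mat n gs \<in> carrier_mat (2^n) (2^n)"
  by (induction gs) auto

lemma circ_append: "circ_mat n (xs @ ys) = circ_mat n ys * circ_mat n xs"
proof (induction xs)
  case Nil then show ?case by (simp add: right_mult_one_mat[OF circ_carrier])
next
  case (Cons x xs)
  then show ?case by (simp add: assoc_mult_mat[OF circ_carrier circ_carrier gate_carrier])
qed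

lemma eq22: "A \<in> carrier_mat 2 2 \<Longrightarrow> B \<in> carrier_mat 2 2 \<Longrightarrow>
  A $$ (0,0) = B $$ (0,0) \<Longrightarrow> A $$ (0,1) = B $$ (0,1) \<Longrightarrow> A $$ (1,0) = B $$ (1,0) \<Longrightarrow> A $$ (1,1) = B $$ (1,1) \<Longrightarrow> A = B"
  apply (rule eq_matI)
  apply (auto simp: less_2_cases_iff)
  done

lemma m22: "A \<in> carrier_mat 2 2 \<Longrightarrow> B \<in> carrier_mat 2 2 \<Longrightarrow> x < 2 \<Longrightarrow> y < 2 \<Longrightarrow>
  (A * B) $$ (x, y) = A $$ (x,0) * B $$ (0,y) + A $$ (x,1) * B $$ (1,y)"
  by (subst mult22) (simp_all add: numeral_2_eq_2)

lemma had_carrier[simp]: "hadamard \<in> carrier_mat 2 2" by (simp add: hadamard_def)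
lemma S_carrier[simp]: "phase_S \<in> carrier_mat 2 2" by (simp add: phase_S_def)
lemma Sdg_carrier[simp]: "phase_Sdg \<in> carrier_mat 2 2" by (simp add: phase_Sdg_def)

lemma sq2b: "complex_of_real (sqrt 2) * complex_of_real (sqrt 2) = 2"
  by (simp flip: of_real_mult)

lemma sq2: "complex_of_real (1 / sqrt 2) * complex_of_real (1 / sqrt 2) = 1/2"
  by (simp flip: of_real_mult)

lemma c22: "A \<in> carrier_mat 2 2 \<Longrightarrow> B \<in> carrier_mat 2 2 \<Longrightarrow> A * B \<in> carrier_mat 2 2"
  by auto

lemma HXH: "hadamard * pauli1 PX * hadamard = pauli1 PZ"
  apply (rule eq22)
  apply (simp_all add: m22 c22 del: index_mult_mat)
  apply (simp_all add: hadamard_def pauli1_def sq2 sq2b)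
  done

lemma SXS: "phase_S * pauli1 PX * phase_Sdg = pauli1 PY"
  apply (rule eq22)
  apply (simp_all add: m22 c22 del: index_mult_mat)
  apply (simp_all add: phase_S_def phase_Sdg_def pauli1_def)
  done

lemma HH: "hadamard * hadamard = 1\<^sub>m 2"
  apply (rule eq22)
  apply (simp_all add: m22 c22 del: index_mult_mat)
  apply (simp_all add: hadamard_def sq2 sq2b)
  done

lemma SSdg: "phase_S * phase_Sdg = 1\<^sub>m 2"
  apply (rule eq22)
  apply (simp_all add: m22 c22 del: index_mult_mat)
  apply (simp_all add: phase_S_def phase_Sdg_def)
  done

lemma SdgS: "phase_Sdg * phase_S = 1\<^sub>m 2"
  apply (rule eq22)
  apply (simp_all add: m22 c22 del: index_mult_mat)
  apply (simp_all add: phase_S_def phase_Sdg_def)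
  done

lemma PP: "pauli1 s * pauli1 s = 1\<^sub>m 2"
  apply (rule eq22)
  apply (simp_all add: m22 c22 del: index_mult_mat)
  apply (cases s; simp_all add: pauli1_def)+
  done

lemma pstr_sq: "pstr n f * pstr n f = 1\<^sub>m (2^n)"
  unfolding pstr_prodmat
  by (subst prodmat_mult) (auto simp: PP prodmat_one)

lemma pow_invol:
  fixes A :: "complex mat"
  assumes A: "A \<in> carrier_mat d d" and AA: "A * A = 1\<^sub>m d"
  shows "(c \<cdot>\<^sub>m A) ^\<^sub>m k = (c ^ k) \<cdot>\<^sub>m (if even k then 1\<^sub>m d else A)"
proof (induction k)
  case 0 then show ?case using A by (auto intro!: eq_matI)
next
  case (Suc k)
  have "(c \<cdot>\<^sub>m A) ^\<^sub>m Suc k = ((c ^ k) \<cdot>\<^sub>m (if even k then 1\<^sub>m d else A)) * (c \<cdot>\<^sub>m A)"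
    by (simp add: Suc.IH)
  also have "\<dots> = (c ^ k * c) \<cdot>\<^sub>m ((if even k then 1\<^sub>m d else A) * A)"
  proof -
    have B: "(if even k then 1\<^sub>m d else A) \<in> carrier_mat d d" using A by auto
    have cA: "c \<cdot>\<^sub>m A \<in> carrier_mat d d" using A by auto
    show ?thesis
      unfolding mult_smult_assoc_mat[OF B cA] mult_smult_distrib[OF B A]
      by (rule eq_matI) auto
  qed
  also have "\<dots> = (c ^ Suc k) \<cdot>\<^sub>m (if even (Suc k) then 1\<^sub>m d else A)"
    using A AA by (auto simp: mult.commute)
  finally show ?case .
qed

lemma exp_series_if:
  fixes c x y :: complex
  shows "(\<lambda>k. (c ^ k * (if even k then x else y)) / of_nat (fact k)) sums
     (((exp c + exp (- c)) / 2) * x + ((exp c - exp (- c)) / 2) * y)"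
proof -
  have e1: "(\<lambda>k. c ^ k / fact k) sums exp c"
    using exp_converges[of c] by (simp add: scaleR_conv_of_real divide_inverse mult.commute)
  have e2: "(\<lambda>k. (- c) ^ k / fact k) sums exp (- c)"
    using exp_converges[of "-c"] by (simp add: scaleR_conv_of_real divide_inverse mult.commute)
  have "(\<lambda>k. ((x + y) / 2) * (c ^ k / fact k) + ((x - y) / 2) * ((- c) ^ k / fact k)) sums
        (((x + y) / 2) * exp c + ((x - y) / 2) * exp (- c))"
    by (intro sums_add sums_mult e1 e2)
  moreover have "(\<lambda>k. ((x + y) / 2) * (c ^ k / fact k) + ((x - y) / 2) * ((- c) ^ k / fact k))
     = (\<lambda>k. (c ^ k * (if even k then x else y)) / of_nat (fact k))"
  proof
    fix k
    show "((x + y) / 2) * (c ^ k / fact k) + ((x - y) / 2) * ((- c) ^ k / fact k)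
      = (c ^ k * (if even k then x else y)) / of_nat (fact k)"
    proof (cases "even k")
      case True
      then have "(- c) ^ k = c ^ k" by simp
      then show ?thesis using True by (simp add: divide_simps) (simp add: algebra_simps)
    next
      case False
      then have "(- c) ^ k = - (c ^ k)" by simp
      then show ?thesis using False by (simp add: divide_simps) (simp add: algebra_simps)
    qed
  qed
  moreover have "((x + y) / 2) * exp c + ((x - y) / 2) * exp (- c) =
      ((exp c + exp (- c)) / 2) * x + ((exp c - exp (- c)) / 2) * y"
    by (simp add: algebra_simps add_divide_distrib diff_divide_distrib)
  ultimately show ?thesis by simp
qed

lemma mat_exp_invol:
  assumes A: "A \<in> carrier_mat d d" and AA: "A * A = 1\<^sub>m d"
  shows "mat_exp (c \<cdot>\<^sub>m A) = ((exp c + exp (- c)) / 2) \<cdot>\<^sub>m 1\<^sub>m d + ((exp c - exp (- c)) / 2) \<cdot>\<^sub>m A"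
proof (rule eq_matI)
  fix i j assume "i < dim_row (((exp c + exp (- c)) / 2) \<cdot>\<^sub>m 1\<^sub>m d + ((exp c - exp (- c)) / 2) \<cdot>\<^sub>m A)"
     "j < dim_col (((exp c + exp (- c)) / 2) \<cdot>\<^sub>m 1\<^sub>m d + ((exp c - exp (- c)) / 2) \<cdot>\<^sub>m A)"
  then have i: "i < d" and j: "j < d" using carrier_matD[OF A] by auto
  have "mat_exp (c \<cdot>\<^sub>m A) $$ (i,j) = (\<Sum>k. (c ^ k * (if even k then (1\<^sub>m d :: complex mat) $$ (i,j) else A $$ (i,j))) / of_nat (fact k))"
    unfolding mat_exp_def using i j A
    by (simp add: pow_invol[OF A AA] if_distrib[of "\<lambda>M. M $$ (i,j)"] cong: if_cong)
  also have "\<dots> = ((exp c + exp (- c)) / 2) * (1\<^sub>m d :: complex mat) $$ (i,j) + ((exp c - exp (- c)) / 2) * A $$ (i,j)"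
    by (rule sums_unique[symmetric, OF exp_series_if])
  finally show "mat_exp (c \<cdot>\<^sub>m A) $$ (i,j) = (((exp c + exp (- c)) / 2) \<cdot>\<^sub>m 1\<^sub>m d + ((exp c - exp (- c)) / 2) \<cdot>\<^sub>m A) $$ (i,j)"
    using i j A by simp
qed (use A carrier_matD[OF A] in \<open>auto simp: mat_exp_def\<close>)

definition localf :: "nat \<Rightarrow> ((nat \<Rightarrow> nat) \<Rightarrow> nat \<Rightarrow> nat) \<Rightarrow> bool" where
  "localf n f \<longleftrightarrow> (\<forall>x y. (\<forall>i<n. x i = y i) \<longrightarrow> (\<forall>i<n. f x i = f y i))"

definition binf :: "nat \<Rightarrow> ((nat \<Rightarrow> nat) \<Rightarrow> nat \<Rightarrow> nat) \<Rightarrow> bool" where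
  "binf n g \<longleftrightarrow> (\<forall>b i. i < n \<longrightarrow> g (Defs.bit b) i < 2)"

lemma perm_mult:
  assumes F: "localf n f" and G: "binf n g"
  shows "perm_mat n f * perm_mat n g = perm_mat n (\<lambda>x. f (g x))"
proof (rule eq_matI)
  fix a b assume "a < dim_row (perm_mat n (\<lambda>x. f (g x)))" "b < dim_col (perm_mat n (\<lambda>x. f (g x)))"
  then have a: "a < 2^n" and b: "b < 2^n" by (auto simp: perm_mat_def)
  obtain c0 where c0: "c0 < 2^n" "\<forall>i<n. Defs.bit c0 i = g (Defs.bit b) i"
    using bit_exists[of n "g (Defs.bit b)"] G by (auto simp: binf_def)
  let ?h = "\<lambda>c. (if \<forall>i<n. Defs.bit a i = f (Defs.bit c) i then 1 else 0) * (if \<forall>i<n. Defs.bit c i = g (Defs.bit b) i then 1 else (0::complex))"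
  have "(perm_mat n f * perm_mat n g) $$ (a,b) = (\<Sum>c<2^n. ?h c)"
    using a b by (simp add: perm_mat_def scalar_prod_def atLeast0LessThan[symmetric])
  also have "\<dots> = ?h c0 + (\<Sum>c\<in>{..<2^n} - {c0}. ?h c)"
    using c0 by (subst sum.remove[of _ c0]) auto
  also have "(\<Sum>c\<in>{..<2^n} - {c0}. ?h c) = 0"
  proof (rule sum.neutral, rule ballI)
    fix c assume c: "c \<in> {..<2^n} - {c0}"
    have "\<not> (\<forall>i<n. Defs.bit c i = g (Defs.bit b) i)"
      using c c0 bit_ext[of c n c0] by auto
    then show "?h c = 0" by simp
  qed
  also have "?h c0 = (if \<forall>i<n. Defs.bit a i = f (g (Defs.bit b)) i then 1 else 0)"
  proof -
    have "\<forall>i<n. f (Defs.bit c0) i = f (g (Defs.bit b)) i"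
      using F c0(2) unfolding localf_def by blast
    then show ?thesis using c0 by simp
  qed
  finally show "(perm_mat n f * perm_mat n g) $$ (a,b) = perm_mat n (\<lambda>x. f (g x)) $$ (a,b)"
    using a b by (simp add: perm_mat_def)
qed (auto simp: perm_mat_def)

lemma perm_cong: "(\<And>b i. i < n \<Longrightarrow> f (Defs.bit b) i = g (Defs.bit b) i) \<Longrightarrow> perm_mat n f = perm_mat n g"
  unfolding perm_mat_def by (rule eq_matI) auto

lemma perm_id: "perm_mat n (\<lambda>x. x) = 1\<^sub>m (2^n)"
  unfolding perm_mat_def by (rule eq_matI) (auto dest: bit_ext)

definition flipf :: "nat set \<Rightarrow> (nat \<Rightarrow> nat) \<Rightarrow> nat \<Rightarrow> nat" where
  "flipf T x i = (if i \<in> T then 1 - x i else x i)"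

definition cnf :: "nat \<Rightarrow> nat \<Rightarrow> (nat \<Rightarrow> nat) \<Rightarrow> nat \<Rightarrow> nat" where
  "cnf c t x i = (if i = t then (x t + x c) mod 2 else x i)"

definition swf :: "nat \<Rightarrow> nat \<Rightarrow> (nat \<Rightarrow> nat) \<Rightarrow> nat \<Rightarrow> nat" where
  "swf c t x i = x (if i = c then t else if i = t then c else i)"

lemma gate_CNOT: "gate_mat n (CNOT c t) = perm_mat n (cnf c t)"
  by (simp add: cnf_def[abs_def])
lemma gate_SWAP: "gate_mat n (SWAP c t) = perm_mat n (swf c t)"
  by (simp add: swf_def[abs_def])

lemma local_flip: "localf n (flipf T)" by (simp add: localf_def flipf_def)
lemma local_cn: "c < n \<Longrightarrow> t < n \<Longrightarrow> localf n (cnf c t)" by (simp add: localf_def cnf_def)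
lemma local_sw: "c < n \<Longrightarrow> t < n \<Longrightarrow> localf n (swf c t)" by (simp add: localf_def swf_def)
lemma bin_flip: "binf n (flipf T)" by (simp add: binf_def flipf_def bit_lt2 less_imp_diff_less)
lemma bin_cn: "binf n (cnf c t)" by (simp add: binf_def cnf_def bit_lt2)
lemma bin_sw: "binf n (swf c t)" by (simp add: binf_def swf_def bit_lt2)
lemma local_comp: "localf n f \<Longrightarrow> localf n g \<Longrightarrow> localf n (\<lambda>x. f (g x))"
  unfolding localf_def by metis

definition xs :: "nat \<Rightarrow> nat set \<Rightarrow> complex mat" where
  "xs n T = perm_mat n (flipf T)"

lemma pstr_xs: "pstr n (\<lambda>i. if i \<in> T then PX else PI) = xs n T"
proof (rule eq_matI)
  fix a b assume "a < dim_row (xs n T)" "b < dim_col (xs n T)"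
  then have a: "a < 2^n" and b: "b < 2^n" by (auto simp: xs_def perm_mat_def)
  have "pstr n (\<lambda>i. if i \<in> T then PX else PI) $$ (a,b) = (\<Prod>i<n. if Defs.bit a i = flipf T (Defs.bit b) i then 1 else 0)"
  proof -
    have e: "pauli_entry (if x \<in> T then PX else PI) (Defs.bit a x) (Defs.bit b x) = (if Defs.bit a x = flipf T (Defs.bit b) x then 1 else 0)" for x
      using bit_01[of a x] bit_01[of b x] by (auto simp: flipf_def)
    show ?thesis using a b by (simp add: pstr_def e)
  qed
  also have "\<dots> = xs n T $$ (a,b)"
    using a b by (simp add: prod_indic xs_def perm_mat_def)
  finally show "pstr n (\<lambda>i. if i \<in> T then PX else PI) $$ (a,b) = xs n T $$ (a,b)" .
qed (auto simp: xs_def perm_mat_def pstr_def)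

lemma bits_cases: "Defs.bit b i = 0 \<or> Defs.bit b i = 1" by (rule bit_01)

lemma cn_conj:
  assumes c: "c < n" and t: "t < n" and ct: "c \<noteq> t" and cT: "c \<in> T1" and tT: "t \<notin> T1"
  shows "perm_mat n (cnf c t) * xs n T1 * perm_mat n (cnf c t) = xs n (insert t T1)"
proof -
  have "perm_mat n (cnf c t) * xs n T1 * perm_mat n (cnf c t) = perm_mat n (\<lambda>x. cnf c t (flipf T1 (cnf c t x)))"
    unfolding xs_def
    by (simp add: perm_mult local_cn[OF c t] bin_flip bin_cn local_comp local_flip)
  also have "\<dots> = xs n (insert t T1)"
    unfolding xs_def
  proof (rule perm_cong)
    fix b i assume "i < n"
    show "cnf c t (flipf T1 (cnf c t (Defs.bit b))) i = flipf (insert t T1) (Defs.bit b) i"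
      using bits_cases[of b t] bits_cases[of b c] ct cT tT
      by (auto simp: cnf_def flipf_def)
  qed
  finally show ?thesis .
qed

lemma sw_conj:
  assumes c: "c < n" and t: "t < n" and cT: "c \<in> T1" and tT: "t \<notin> T1"
  shows "perm_mat n (swf c t) * xs n T1 * perm_mat n (swf c t) = xs n (insert t (T1 - {c}))"
proof -
  have "perm_mat n (swf c t) * xs n T1 * perm_mat n (swf c t) = perm_mat n (\<lambda>x. swf c t (flipf T1 (swf c t x)))"
    unfolding xs_def
    by (simp add: perm_mult local_sw[OF c t] bin_flip bin_sw local_comp local_flip)
  also have "\<dots> = xs n (insert t (T1 - {c}))"
    unfolding xs_def
  proof (rule perm_cong)
    fix b i assume "i < n"
    show "swf c t (flipf T1 (swf c t (Defs.bit b))) i = flipf (insert t (T1 - {c})) (Defs.bit b) i"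
      using cT tT by (auto simp: swf_def flipf_def)
  qed
  finally show ?thesis .
qed

lemma cn_inv: "c < n \<Longrightarrow> t < n \<Longrightarrow> c \<noteq> t \<Longrightarrow> perm_mat n (cnf c t) * perm_mat n (cnf c t) = 1\<^sub>m (2^n)"
  apply (simp add: perm_mult local_cn bin_cn flip: perm_id)
  apply (rule perm_cong)
  subgoal for b i using bits_cases[of b t] bits_cases[of b c] by (auto simp: cnf_def)
  done

lemma sw_inv: "c < n \<Longrightarrow> t < n \<Longrightarrow> perm_mat n (swf c t) * perm_mat n (swf c t) = 1\<^sub>m (2^n)"
  apply (simp add: perm_mult local_sw bin_sw flip: perm_id)
  apply (rule perm_cong)
  by (auto simp: swf_def)

fun ginv :: "gate \<Rightarrow> gate" where
  "ginv (S q) = Sdg q" | "ginv (Sdg q) = S q" | "ginv g = g"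

definition invc :: "gate list \<Rightarrow> gate list" where
  "invc gs = rev (map ginv gs)"

lemma dims[simp]:
  "dim_row (gate_mat n g) = 2^n" "dim_col (gate_mat n g) = 2^n"
  "dim_row (circ_mat n gs) = 2^n" "dim_col (circ_mat n gs) = 2^n"
  "dim_row (pstr n f) = 2^n" "dim_col (pstr n f) = 2^n"
  "dim_row (embed1 n q U) = 2^n" "dim_col (embed1 n q U) = 2^n"
  "dim_row (perm_mat n h) = 2^n" "dim_col (perm_mat n h) = 2^n"
  "dim_row (prodmat n F) = 2^n" "dim_col (prodmat n F) = 2^n"
  "dim_row (pauli1 s) = 2" "dim_col (pauli1 s) = 2"
  "dim_row (xs n T) = 2^n" "dim_col (xs n T) = 2^n"
  using carrier_matD[OF gate_carrier[of n g]] carrier_matD[OF circ_carrier[of n gs]] by (auto simp: pstr_def embed1_def perm_mat_def prodmat_def pauli1_def xs_def)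

lemma assoc_sq: "A \<in> carrier_mat N N \<Longrightarrow> B \<in> carrier_mat N N \<Longrightarrow> C \<in> carrier_mat N N \<Longrightarrow> A * B * C = A * (B * C)"
  by (rule assoc_mult_mat)

lemma msq: "A \<in> carrier_mat N N \<Longrightarrow> B \<in> carrier_mat N N \<Longrightarrow> A * B \<in> carrier_mat N N"
  by (rule mult_carrier_mat)

definition cj :: "nat \<Rightarrow> gate list \<Rightarrow> complex mat \<Rightarrow> complex mat \<Rightarrow> bool" where
  "cj n gs M' M \<longleftrightarrow> circ_mat n (invc gs) * M' * circ_mat n gs = M"

lemma cj_nil: "M \<in> carrier_mat (2^n) (2^n) \<Longrightarrow> cj n [] M M"
  by (simp add: cj_def invc_def)

lemma cj_single: "M' \<in> carrier_mat (2^n) (2^n) \<Longrightarrow> cj n [g] M' M \<longleftrightarrow> gate_mat n (ginv g) * M' * gate_mat n g = M"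
  by (simp add: cj_def invc_def)

lemma cj_append:
  assumes 1: "cj n gs1 M1 M" and 2: "cj n gs2 M' M1" and M': "M' \<in> carrier_mat (2^n) (2^n)"
  shows "cj n (gs1 @ gs2) M' M"
proof -
  have inv: "invc (gs1 @ gs2) = invc gs2 @ invc gs1" by (simp add: invc_def)
  let ?I1 = "circ_mat n (invc gs1)" and ?I2 = "circ_mat n (invc gs2)"
    and ?C1 = "circ_mat n gs1" and ?C2 = "circ_mat n gs2"
  have "circ_mat n (invc (gs1 @ gs2)) * M' * circ_mat n (gs1 @ gs2) = ?I1 * ?I2 * M' * (?C2 * ?C1)"
    by (simp add: inv circ_append)
  also have "\<dots> = (?I1 * ?I2 * M' * ?C2) * ?C1"
    by (rule assoc_sq[symmetric]) (auto intro!: msq M')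
  also have "?I1 * ?I2 * M' * ?C2 = ?I1 * (?I2 * M' * ?C2)"
  proof -
    have "?I1 * ?I2 * M' = ?I1 * (?I2 * M')"
      by (rule assoc_sq) (auto intro!: msq M')
    moreover have "?I1 * (?I2 * M') * ?C2 = ?I1 * (?I2 * M' * ?C2)"
      by (rule assoc_sq) (auto intro!: msq M')
    ultimately show ?thesis by simp
  qed
  also have "?I2 * M' * ?C2 = M1" using 2 by (simp add: cj_def)
  also have "?I1 * M1 * ?C1 = M" using 1 by (simp add: cj_def)
  finally show ?thesis by (simp add: cj_def)
qed

lemma cj_cons: "cj n [g] M1 M \<Longrightarrow> cj n gs M' M1 \<Longrightarrow> M' \<in> carrier_mat (2^n) (2^n) \<Longrightarrow> cj n (g # gs) M' M"
  using cj_append[of n "[g]" M1 M gs M'] by simp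

lemma pm3: "(\<And>i. i < n \<Longrightarrow> F i \<in> carrier_mat 2 2) \<Longrightarrow> (\<And>i. i < n \<Longrightarrow> G i \<in> carrier_mat 2 2) \<Longrightarrow> (\<And>i. i < n \<Longrightarrow> K i \<in> carrier_mat 2 2) \<Longrightarrow>
  prodmat n F * prodmat n G * prodmat n K = prodmat n (\<lambda>i. F i * G i * K i)"
  by (simp add: prodmat_mult c22)

lemma fupd_carrier: "U \<in> carrier_mat 2 2 \<Longrightarrow> ((\<lambda>_. 1\<^sub>m 2)(q := U)) i \<in> carrier_mat 2 2"
  by auto

lemma cj_H:
  assumes q: "q < n" and fq: "f q = PZ"
  shows "cj n [H q] (pstr n (f(q := PX))) (pstr n f)"
proof -
  have "embed1 n q hadamard * pstr n (f(q := PX)) * embed1 n q hadamard = pstr n f"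
    unfolding embed1_prodmat[OF q] pstr_prodmat
    apply (subst pm3)
       apply (auto intro: fupd_carrier)[3]
    apply (rule prodmat_cong)
    using HXH fq by (auto simp: left_mult_one_mat'[of _ 2] right_mult_one_mat'[of _ 2])
  then show ?thesis by (simp add: cj_single)
qed

lemma cj_Sdg:
  assumes q: "q < n" and fq: "f q = PY"
  shows "cj n [Sdg q] (pstr n (f(q := PX))) (pstr n f)"
proof -
  have "embed1 n q phase_S * pstr n (f(q := PX)) * embed1 n q phase_Sdg = pstr n f"
    unfolding embed1_prodmat[OF q] pstr_prodmat
    apply (subst pm3)
       apply (auto intro: fupd_carrier)[3]
    apply (rule prodmat_cong)
    using SXS fq by (auto simp: left_mult_one_mat'[of _ 2] right_mult_one_mat'[of _ 2])
  then show ?thesis by (simp add: cj_single)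
qed

lemma embed1_one: "q < n \<Longrightarrow> embed1 n q (1\<^sub>m 2) = 1\<^sub>m (2^n)"
  unfolding embed1_prodmat prodmat_one[symmetric] by (rule prodmat_cong) simp

lemma embed1_mult: "q < n \<Longrightarrow> A \<in> carrier_mat 2 2 \<Longrightarrow> B \<in> carrier_mat 2 2 \<Longrightarrow> embed1 n q A * embed1 n q B = embed1 n q (A * B)"
  unfolding embed1_prodmat
  by (subst prodmat_mult) (auto intro!: prodmat_cong simp del: fun_upd_apply, auto)

definition okg :: "nat \<Rightarrow> (nat \<Rightarrow> nat \<Rightarrow> bool) \<Rightarrow> gate \<Rightarrow> bool" where
  "okg n E g \<longleftrightarrow> gate_ok n E g \<and> (is_HS g \<or> is_2q g) \<and> (\<forall>c t. g = CNOT c t \<longrightarrow> c \<noteq> t)"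

lemma cj_one_single: "okg n E g \<Longrightarrow> cj n [g] (1\<^sub>m (2^n)) (1\<^sub>m (2^n))"
proof (cases g)
  case (H q) assume "okg n E g"
  then show ?thesis using H
    by (simp add: cj_single okg_def right_mult_one_mat'[of _ "2^n"] embed1_mult HH embed1_one)
next
  case (S q) assume "okg n E g"
  then show ?thesis using S
    by (simp add: cj_single okg_def right_mult_one_mat'[of _ "2^n"] embed1_mult SdgS embed1_one)
next
  case (Sdg q) assume "okg n E g"
  then show ?thesis using Sdg
    by (simp add: cj_single okg_def right_mult_one_mat'[of _ "2^n"] embed1_mult SSdg embed1_one)
next
  case (CNOT c t) assume "okg n E g"
  then show ?thesis using CNOT
    by (simp add: cj_single okg_def right_mult_one_mat'[of _ "2^n"] gate_CNOT cn_inv del: gate_mat.simps)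
next
  case (SWAP c t) assume "okg n E g"
  then show ?thesis using SWAP
    by (simp add: cj_single okg_def right_mult_one_mat'[of _ "2^n"] gate_SWAP sw_inv del: gate_mat.simps)
qed (simp add: okg_def)

lemma cj_one: "\<forall>g\<in>set gs. okg n E g \<Longrightarrow> cj n gs (1\<^sub>m (2^n)) (1\<^sub>m (2^n))"
proof (induction gs)
  case Nil then show ?case by (simp add: cj_nil)
next
  case (Cons g gs)
  then show ?case by (intro cj_cons[OF cj_one_single[of n E g]]) auto
qed

definition hgate :: "pauli \<Rightarrow> nat \<Rightarrow> gate list" where
  "hgate s q = (case s of PZ \<Rightarrow> [H q] | PY \<Rightarrow> [Sdg q] | _ \<Rightarrow> [])"

definition hs_of :: "(nat \<Rightarrow> pauli) \<Rightarrow> nat list \<Rightarrow> gate list" where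
  "hs_of f qs = concat (map (\<lambda>q. hgate (f q) q) qs)"

definition xify :: "pauli \<Rightarrow> pauli" where
  "xify s = (if s = PI then PI else PX)"

lemma cj_hgate:
  assumes q: "q < n"
  shows "cj n (hgate (f q) q) (pstr n (f(q := xify (f q)))) (pstr n f)"
proof (cases "f q")
  case PI
  then have "f(q := xify (f q)) = f" by (auto simp: xify_def)
  then show ?thesis using PI by (simp add: hgate_def cj_nil)
next
  case PX
  then have "f(q := xify (f q)) = f" by (auto simp: xify_def)
  then show ?thesis using PX by (simp add: hgate_def cj_nil)
next
  case PY
  then show ?thesis using cj_Sdg[of q n f, OF q PY] by (simp add: hgate_def xify_def)
next
  case PZ
  then show ?thesis using cj_H[of q n f, OF q PZ] by (simp add: hgate_def xify_def)
qed

lemma cj_hs: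
  "distinct qs \<Longrightarrow> set qs \<subseteq> {..<n} \<Longrightarrow>
   cj n (hs_of f qs) (pstr n (\<lambda>i. if i \<in> set qs \<and> f i \<noteq> PI then PX else f i)) (pstr n f)"
proof (induction qs arbitrary: f)
  case Nil
  then show ?case by (simp add: hs_of_def cj_nil)
next
  case (Cons q qs)
  let ?f1 = "f(q := xify (f q))"
  have q: "q < n" and nq: "q \<notin> set qs" using Cons.prems by auto
  have e1: "hs_of ?f1 qs = hs_of f qs"
    unfolding hs_of_def using nq by (intro arg_cong[where f=concat] map_cong) auto
  have e2: "(\<lambda>i. if i \<in> set qs \<and> ?f1 i \<noteq> PI then PX else ?f1 i) = (\<lambda>i. if i \<in> set (q # qs) \<and> f i \<noteq> PI then PX else f i)"
    using nq by (auto simp: xify_def)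
  have IH: "cj n (hs_of f qs) (pstr n (\<lambda>i. if i \<in> set (q # qs) \<and> f i \<noteq> PI then PX else f i)) (pstr n ?f1)"
  proof -
    have "cj n (hs_of ?f1 qs) (pstr n (\<lambda>i. if i \<in> set qs \<and> ?f1 i \<noteq> PI then PX else ?f1 i)) (pstr n ?f1)"
      by (rule Cons.IH) (use Cons.prems in auto)
    then show ?thesis unfolding e1 e2 .
  qed
  have "cj n (hgate (f q) q @ hs_of f qs) (pstr n (\<lambda>i. if i \<in> set (q # qs) \<and> f i \<noteq> PI then PX else f i)) (pstr n f)"
    by (rule cj_append[OF cj_hgate[OF q] IH]) simp
  then show ?case by (simp add: hs_of_def)
qed

lemma hs_gates: "set qs \<subseteq> {..<n} \<Longrightarrow> g \<in> set (hs_of f qs) \<Longrightarrow> okg n E g \<and> is_HS g"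
  by (auto simp: hs_of_def hgate_def okg_def split: pauli.split_asm; metis pauli.exhaust)

lemma hs_count: "length (filter is_HS (hs_of f qs)) \<le> length qs"
proof (induction qs)
  case Nil then show ?case by (simp add: hs_of_def)
next
  case (Cons q qs)
  have "length (filter is_HS (hgate (f q) q)) \<le> 1"
    by (auto simp: hgate_def split: pauli.splits)
  then show ?case using Cons by (simp add: hs_of_def)
qed

lemma exit_edge: "E\<^sup>*\<^sup>* x y \<Longrightarrow> x \<in> A \<Longrightarrow> y \<notin> A \<Longrightarrow> \<exists>a b. a \<in> A \<and> b \<notin> A \<and> E a b"
  by (induction rule: rtranclp_induct) auto

definition parents :: "(nat \<Rightarrow> nat \<Rightarrow> bool) \<Rightarrow> nat list \<Rightarrow> bool" where
  "parents E vs \<longleftrightarrow> (\<forall>k<length vs. 0 < k \<longrightarrow> (\<exists>j<k. E (vs ! j) (vs ! k)))"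

lemma order_exists:
  assumes G: "connected_simple_graph n E"
  shows "1 \<le> m \<Longrightarrow> m \<le> n \<Longrightarrow> \<exists>vs. length vs = m \<and> distinct vs \<and> set vs \<subseteq> {..<n} \<and> parents E vs"
proof -
  have conn: "\<forall>x<n. \<forall>y<n. E\<^sup>*\<^sup>* x y" and eb: "\<forall>x y. E x y \<longrightarrow> x < n \<and> y < n"
    using G unfolding connected_simple_graph_def by auto
  show "1 \<le> m \<Longrightarrow> m \<le> n \<Longrightarrow> ?thesis"
proof (induction m)
  case 0 then show ?case by simp
next
  case (Suc m)
  show ?case
  proof (cases "m = 0")
    case True
    then show ?thesis using Suc.prems by (intro exI[of _ "[0]"]) (auto simp: parents_def)
  next
    case False
    then obtain vs where vs: "length vs = m" "distinct vs" "set vs \<subseteq> {..<n}" "parents E vs"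
      using Suc.IH Suc.prems False by fastforce
    have "card (set vs) = m" using vs distinct_card by metis
    then have "set vs \<noteq> {..<n}" using Suc.prems by (metis card_lessThan Suc_le_lessD less_irrefl)
    then obtain y where y: "y < n" "y \<notin> set vs" using vs(3) by blast
    have v0: "vs ! 0 \<in> set vs" using False vs(1) by auto
    have "vs ! 0 < n" using v0 vs(3) by auto
    then have "E\<^sup>*\<^sup>* (vs ! 0) y" using conn y by simp
    then obtain a b where ab: "a \<in> set vs" "b \<notin> set vs" "E a b" using exit_edge[OF _ v0 y(2)] by blast
    obtain j where j: "j < length vs" "vs ! j = a" using ab(1) by (auto simp: in_set_conv_nth)
    have bn: "b < n" using ab(3) eb by simp
    show ?thesis
    proof (intro exI[of _ "vs @ [b]"] conjI)
      show "parents E (vs @ [b])"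
        unfolding parents_def
      proof (intro allI impI)
        fix k assume k: "k < length (vs @ [b])" "0 < k"
        show "\<exists>j<k. E ((vs @ [b]) ! j) ((vs @ [b]) ! k)"
        proof (cases "k < length vs")
          case True
          then obtain i where "i < k" "E (vs ! i) (vs ! k)" using vs(4) k unfolding parents_def by blast
          then show ?thesis using True by (intro exI[of _ i]) (auto simp: nth_append)
        next
          case False
          then have "k = length vs" using k by auto
          then show ?thesis using j ab by (intro exI[of _ j]) (auto simp: nth_append)
        qed
      qed
    next
      show "length (vs @ [b]) = Suc m" using vs by simp
      show "distinct (vs @ [b])" using vs ab by simp
      show "set (vs @ [b]) \<subseteq> {..<n}" using vs bn by simp
    qed
  qed
qed
qed


lemma xs_carrier[simp]: "xs n T \<in> carrier_mat (2^n) (2^n)"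
  by (simp add: xs_def)

lemma tree_reduce:
  assumes Eb: "\<forall>x y. E x y \<longrightarrow> x < n \<and> y < n"
  shows "vs \<noteq> [] \<Longrightarrow> parents E vs \<Longrightarrow> T \<subseteq> set vs \<Longrightarrow> T \<noteq> {} \<Longrightarrow> set vs \<subseteq> {..<n} \<Longrightarrow>
    \<exists>cs. (\<forall>g\<in>set cs. okg n E g \<and> is_2q g) \<and> length cs \<le> length vs - 1 \<and> cj n cs (xs n {vs ! 0}) (xs n T)"
proof (induction vs arbitrary: T rule: rev_induct)
  case Nil then show ?case by simp
next
  case (snoc v ws)
  show ?case
  proof (cases "ws = []")
    case True
    then have "T = {v}" using snoc.prems by auto
    then show ?thesis using True by (intro exI[of _ "[]"]) (simp add: cj_nil)
  next
    case False
    have pw: "parents E ws" unfolding parents_def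
    proof (intro allI impI)
      fix k assume k: "k < length ws" "0 < k"
      then obtain j where "j < k" "E ((ws @ [v]) ! j) ((ws @ [v]) ! k)"
        using snoc.prems(2) unfolding parents_def by (metis length_append_singleton less_SucI)
      then show "\<exists>j<k. E (ws ! j) (ws ! k)" using k by (metis nth_append less_trans)
    qed
    have nth0: "(ws @ [v]) ! 0 = ws ! 0" using False by (simp add: nth_append)
    have sw: "set ws \<subseteq> {..<n}" using snoc.prems by auto
    show ?thesis
    proof (cases "T \<subseteq> set ws")
      case True
      then obtain cs where "(\<forall>g\<in>set cs. okg n E g \<and> is_2q g)" "length cs \<le> length ws - 1" "cj n cs (xs n {ws ! 0}) (xs n T)"
        using snoc.IH[OF False pw True snoc.prems(4) sw] by blast
      then show ?thesis using nth0 by (intro exI[of _ cs]) auto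
    next
      case nT: False
      then have vT: "v \<in> T" and vws: "v \<notin> set ws" using snoc.prems by auto
      obtain j where j: "j < length ws" "E (ws ! j) v"
      proof -
        have "length ws < length (ws @ [v])" "0 < length ws" using False by auto
        then obtain j where "j < length ws" "E ((ws @ [v]) ! j) ((ws @ [v]) ! length ws)"
          using snoc.prems(2) unfolding parents_def by blast
        then show ?thesis using that by (simp add: nth_append)
      qed
      define u where "u = ws ! j"
      have u: "u \<in> set ws" "E u v" "u \<noteq> v" using j vws by (auto simp: u_def)
      have un: "u < n" "v < n" using Eb u(2) by auto
      show ?thesis
      proof (cases "u \<in> T")
        case True
        define T1 where "T1 = T - {v}"
        have T1: "u \<in> T1" "v \<notin> T1" "insert v T1 = T" "T1 \<subseteq> set ws" "T1 \<noteq> {}"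
          using True u vT snoc.prems(3) by (auto simp: T1_def)
        obtain cs where cs: "(\<forall>g\<in>set cs. okg n E g \<and> is_2q g)" "length cs \<le> length ws - 1" "cj n cs (xs n {ws ! 0}) (xs n T1)"
          using snoc.IH[OF False pw T1(4) T1(5) sw] by blast
        have g: "cj n [CNOT u v] (xs n T1) (xs n T)"
          using cn_conj[OF un u(3) T1(1) T1(2)] T1(3)
          by (simp add: cj_single gate_CNOT del: gate_mat.simps)
        have "cj n (CNOT u v # cs) (xs n {ws ! 0}) (xs n T)"
          by (rule cj_cons[OF g cs(3)]) simp
        moreover have "\<forall>g\<in>set (CNOT u v # cs). okg n E g \<and> is_2q g" using cs(1) un u by (simp add: okg_def)
        moreover have "length (CNOT u v # cs) \<le> length (ws @ [v]) - 1" using cs(2) False by (cases ws) auto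
        ultimately show ?thesis using nth0 by metis
      next
        case False2: False
        define T1 where "T1 = insert u (T - {v})"
        have T1: "u \<in> T1" "v \<notin> T1" "insert v (T1 - {u}) = T" "T1 \<subseteq> set ws" "T1 \<noteq> {}"
          using False2 u vT snoc.prems(3) by (auto simp: T1_def)
        obtain cs where cs: "(\<forall>g\<in>set cs. okg n E g \<and> is_2q g)" "length cs \<le> length ws - 1" "cj n cs (xs n {ws ! 0}) (xs n T1)"
          using snoc.IH[OF False pw T1(4) T1(5) sw] by blast
        have g: "cj n [SWAP u v] (xs n T1) (xs n T)"
          using sw_conj[OF un T1(1) T1(2)] T1(3)
          by (simp add: cj_single gate_SWAP del: gate_mat.simps)
        have "cj n (SWAP u v # cs) (xs n {ws ! 0}) (xs n T)"
          by (rule cj_cons[OF g cs(3)]) simp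
        moreover have "\<forall>g\<in>set (SWAP u v # cs). okg n E g \<and> is_2q g" using cs(1) un u by (simp add: okg_def)
        moreover have "length (SWAP u v # cs) \<le> length (ws @ [v]) - 1" using cs(2) False by (cases ws) auto
        ultimately show ?thesis using nth0 by metis
      qed
    qed
  qed
qed

lemma pauli1_PI: "pauli1 PI = 1\<^sub>m 2"
  by (rule eq_matI) (auto simp: pauli1_def)

lemma embed1_X: "r < n \<Longrightarrow> embed1 n r (pauli1 PX) = xs n {r}"
  unfolding embed1_prodmat pstr_xs[symmetric] pstr_prodmat
  by (rule prodmat_cong) (auto simp: pauli1_PI)

lemma embed1_lin:
  assumes r: "r < n" and A: "A \<in> carrier_mat 2 2" and B: "B \<in> carrier_mat 2 2"
  shows "embed1 n r (a \<cdot>\<^sub>m A + b \<cdot>\<^sub>m B) = a \<cdot>\<^sub>m embed1 n r A + b \<cdot>\<^sub>m embed1 n r B"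
proof (rule eq_matI)
  fix i j assume "i < dim_row (a \<cdot>\<^sub>m embed1 n r A + b \<cdot>\<^sub>m embed1 n r B)" "j < dim_col (a \<cdot>\<^sub>m embed1 n r A + b \<cdot>\<^sub>m embed1 n r B)"
  then have i: "i < 2^n" and j: "j < 2^n" by auto
  have "Defs.bit i r < 2" "Defs.bit j r < 2" by (rule bit_lt2)+
  then show "embed1 n r (a \<cdot>\<^sub>m A + b \<cdot>\<^sub>m B) $$ (i, j) = (a \<cdot>\<^sub>m embed1 n r A + b \<cdot>\<^sub>m embed1 n r B) $$ (i, j)"
    using i j A B by (cases "\<forall>ia<n. ia \<noteq> r \<longrightarrow> Defs.bit i ia = Defs.bit j ia") (simp_all add: embed1_def, blast)
qed auto

lemma sandwich:
  fixes I C X :: "complex mat" and a b :: complex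
  assumes I: "I \<in> carrier_mat N N" and C: "C \<in> carrier_mat N N" and X: "X \<in> carrier_mat N N"
  shows "I * (a \<cdot>\<^sub>m 1\<^sub>m N + b \<cdot>\<^sub>m X) * C = a \<cdot>\<^sub>m (I * C) + b \<cdot>\<^sub>m (I * X * C)"
proof -
  have o: "1\<^sub>m N \<in> carrier_mat N N" by (rule one_carrier_mat)
  have aO: "a \<cdot>\<^sub>m 1\<^sub>m N \<in> carrier_mat N N" by (rule smult_carrier_mat[OF o])
  have bX: "b \<cdot>\<^sub>m X \<in> carrier_mat N N" by (rule smult_carrier_mat[OF X])
  have IX: "I * X \<in> carrier_mat N N" by (rule mult_carrier_mat[OF I X])
  have aI: "a \<cdot>\<^sub>m I \<in> carrier_mat N N" by (rule smult_carrier_mat[OF I])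
  have bIX: "b \<cdot>\<^sub>m (I * X) \<in> carrier_mat N N" by (rule smult_carrier_mat[OF IX])
  have 1: "I * (a \<cdot>\<^sub>m 1\<^sub>m N + b \<cdot>\<^sub>m X) = I * (a \<cdot>\<^sub>m 1\<^sub>m N) + I * (b \<cdot>\<^sub>m X)"
    by (rule mult_add_distrib_mat[OF I aO bX])
  have 2: "I * (a \<cdot>\<^sub>m 1\<^sub>m N) = a \<cdot>\<^sub>m (I * 1\<^sub>m N)" by (rule mult_smult_distrib[OF I o])
  have 3: "I * 1\<^sub>m N = I" by (rule right_mult_one_mat[OF I])
  have 4: "I * (b \<cdot>\<^sub>m X) = b \<cdot>\<^sub>m (I * X)" by (rule mult_smult_distrib[OF I X])
  have 5: "(a \<cdot>\<^sub>m I + b \<cdot>\<^sub>m (I * X)) * C = (a \<cdot>\<^sub>m I) * C + (b \<cdot>\<^sub>m (I * X)) * C"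
    by (rule add_mult_distrib_mat[OF aI bIX C])
  have 6: "(a \<cdot>\<^sub>m I) * C = a \<cdot>\<^sub>m (I * C)" by (rule mult_smult_assoc_mat[OF I C])
  have 7: "(b \<cdot>\<^sub>m (I * X)) * C = b \<cdot>\<^sub>m (I * X * C)" by (rule mult_smult_assoc_mat[OF IX C])
  show ?thesis unfolding 1 2 3 4 5 6 7 ..
qed

lemma okg_ginv: "okg n E g \<Longrightarrow> okg n E (ginv g)"
  by (cases g) (auto simp: okg_def)

lemma is_HS_ginv: "is_HS (ginv g) = is_HS g" by (cases g) auto
lemma is_2q_ginv: "is_2q (ginv g) = is_2q g" by (cases g) auto

lemma okg_not_Rx: "okg n E g \<Longrightarrow> \<not> is_Rx g"
  by (cases g) (auto simp: okg_def)

lemma count_invc: "(\<And>g. P (ginv g) = P g) \<Longrightarrow> length (filter P (invc us)) = length (filter P us)"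
proof -
  assume h: "\<And>g. P (ginv g) = P g"
  have "P \<circ> ginv = P" using h by auto
  then show ?thesis by (simp add: invc_def filter_map rev_filter[symmetric])
qed

lemma is2q_notHS: "is_2q g \<Longrightarrow> \<not> is_HS g" by (cases g) auto

theorem proposition3p5:
  fixes n :: nat and E :: "nat \<Rightarrow> nat \<Rightarrow> bool" and ps :: "pauli list" and \<theta> :: real
  assumes "connected_simple_graph n E"
    and "length ps = n"
    and "non_identity_pauli ps"
  shows "\<exists>gs :: gate list.
           (\<forall>g\<in>set gs. gate_ok n E g) \<and>
           length (filter is_Rx gs) = 1 \<and>
           (\<forall>\<phi> q. Rx \<phi> q \<in> set gs \<longrightarrow> \<phi> = \<theta>) \<and>
           length (filter is_HS gs) \<le> 2 * n \<and>
           length (filter is_2q gs) \<le> 2 * n - 2 \<and>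
           circ_mat n gs = mat_exp ((\<i> * complex_of_real (\<theta> / 2)) \<cdot>\<^sub>m pauli_mat ps)"
proof -
  note G = assms(1)
  have Eb: "\<forall>x y. E x y \<longrightarrow> x < n \<and> y < n" using G unfolding connected_simple_graph_def by auto
  define f where "f = (\<lambda>i. ps ! i)"
  obtain i0 where i0: "i0 < n" "f i0 \<noteq> PI" using assms(2,3) by (auto simp: non_identity_pauli_def f_def)
  then have n1: "1 \<le> n" by simp
  obtain vs where vs: "length vs = n" "distinct vs" "set vs \<subseteq> {..<n}" "parents E vs"
    using order_exists[OF G n1 order.refl] by blast
  have svs: "set vs = {..<n}"
    using vs by (metis card_lessThan card_subset_eq distinct_card finite_lessThan)
  define T where "T = {i. i < n \<and> f i \<noteq> PI}"
  have T: "T \<subseteq> set vs" "T \<noteq> {}" using svs i0 by (auto simp: T_def)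
  have vsne: "vs \<noteq> []" using vs(1) n1 by auto
  obtain cs where cs: "\<forall>g\<in>set cs. okg n E g \<and> is_2q g" "length cs \<le> length vs - 1" "cj n cs (xs n {vs ! 0}) (xs n T)"
    using tree_reduce[OF Eb vsne vs(4) T vs(3)] by blast
  define r where "r = vs ! 0"
  have "r \<in> set vs" using vsne by (simp add: r_def)
  then have r: "r < n" using vs(3) by auto
  define hs where "hs = hs_of f [0..<n]"
  have hs: "cj n hs (pstr n (\<lambda>i. if i \<in> set [0..<n] \<and> f i \<noteq> PI then PX else f i)) (pstr n f)"
    unfolding hs_def by (rule cj_hs) auto
  have "pstr n (\<lambda>i. if i \<in> set [0..<n] \<and> f i \<noteq> PI then PX else f i) = pstr n (\<lambda>i. if i \<in> T then PX else PI)"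
    by (rule pstr_cong) (auto simp: T_def)
  then have hs': "cj n hs (xs n T) (pstr n f)" using hs by (simp add: pstr_xs)
  define us where "us = hs @ cs"
  have cjus: "cj n us (xs n {r}) (pstr n f)"
    unfolding us_def r_def by (rule cj_append[OF hs' cs(3)]) simp
  have "set [0..<n] \<subseteq> {..<n}" by auto
  then have hsg: "\<forall>g\<in>set hs. okg n E g \<and> is_HS g" using hs_gates[where qs="[0..<n]" and n=n and f=f and E=E] by (auto simp: hs_def)
  have okus: "\<forall>g\<in>set us. okg n E g" using hsg cs(1) by (auto simp: us_def)
  have okinv: "\<forall>g\<in>set (invc us). okg n E g" using okus okg_ginv by (auto simp: invc_def)
  define gs where "gs = us @ [Rx \<theta> r] @ invc us"
  define c where "c = \<i> * complex_of_real (\<theta> / 2)"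
  define ch where "ch = (exp c + exp (- c)) / 2"
  define sh where "sh = (exp c - exp (- c)) / 2"
  have rot: "rot_x \<theta> = ch \<cdot>\<^sub>m 1\<^sub>m 2 + sh \<cdot>\<^sub>m pauli1 PX"
    unfolding rot_x_def ch_def sh_def c_def by (rule mat_exp_invol) (auto simp: PP)
  have emb: "embed1 n r (rot_x \<theta>) = ch \<cdot>\<^sub>m 1\<^sub>m (2^n) + sh \<cdot>\<^sub>m xs n {r}"
    unfolding rot by (simp add: embed1_lin r embed1_one embed1_X)
  let ?I = "circ_mat n (invc us)" and ?C = "circ_mat n us"
  have "circ_mat n gs = ?I * embed1 n r (rot_x \<theta>) * ?C"
    by (simp add: gs_def circ_append)
  also have "\<dots> = ch \<cdot>\<^sub>m (?I * ?C) + sh \<cdot>\<^sub>m (?I * xs n {r} * ?C)"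
    unfolding emb by (rule sandwich) auto
  also have "?I * ?C = 1\<^sub>m (2^n)"
  proof -
    have "cj n us (1\<^sub>m (2^n)) (1\<^sub>m (2^n))" by (rule cj_one[OF okus])
    then show ?thesis by (simp add: cj_def right_mult_one_mat'[of _ "2^n"])
  qed
  also have "?I * xs n {r} * ?C = pstr n f" using cjus by (simp add: cj_def)
  also have "ch \<cdot>\<^sub>m 1\<^sub>m (2^n) + sh \<cdot>\<^sub>m pstr n f = mat_exp (c \<cdot>\<^sub>m pauli_mat ps)"
  proof -
    have "pauli_mat ps = pstr n f" using assms(2) by (simp add: pauli_mat_pstr f_def)
    then show ?thesis unfolding ch_def sh_def
      by (simp add: mat_exp_invol[OF pstr_carrier pstr_sq])
  qed
  finally have circ: "circ_mat n gs = mat_exp (c \<cdot>\<^sub>m pauli_mat ps)" .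
  have nrx_us: "filter is_Rx us = []" unfolding filter_empty_conv using okus okg_not_Rx by blast
  have nrx_inv: "filter is_Rx (invc us) = []" unfolding filter_empty_conv using okinv okg_not_Rx by blast
  have hsc: "length (filter is_HS us) \<le> n"
  proof -
    have "filter is_HS cs = []" unfolding filter_empty_conv using cs(1) is2q_notHS by blast
    then have "length (filter is_HS us) = length (filter is_HS hs)" by (simp add: us_def)
    also have "\<dots> \<le> n" using hs_count[of f "[0..<n]"] by (simp add: hs_def)
    finally show ?thesis .
  qed
  have tqc: "length (filter is_2q us) \<le> n - 1"
  proof -
    have "filter is_2q hs = []" unfolding filter_empty_conv using hsg is2q_notHS by blast
    then have "length (filter is_2q us) = length (filter is_2q cs)" by (simp add: us_def)
    also have "\<dots> \<le> length cs" by simp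
    also have "\<dots> \<le> n - 1" using cs(2) vs(1) by simp
    finally show ?thesis .
  qed
  show ?thesis
  proof (intro exI[of _ gs] conjI)
    show "\<forall>g\<in>set gs. gate_ok n E g" using okus okinv r by (auto simp: gs_def okg_def)
    show "length (filter is_Rx gs) = 1" using nrx_us nrx_inv by (simp add: gs_def)
    show "\<forall>\<phi> q. Rx \<phi> q \<in> set gs \<longrightarrow> \<phi> = \<theta>"
      using okus okinv okg_not_Rx by (fastforce simp: gs_def)
    show "length (filter is_HS gs) \<le> 2 * n"
      using hsc count_invc[of is_HS us] is_HS_ginv by (simp add: gs_def)
    show "length (filter is_2q gs) \<le> 2 * n - 2"
      using tqc count_invc[of is_2q us] is_2q_ginv by (simp add: gs_def)
    show "circ_mat n gs = mat_exp ((\<i> * complex_of_real (\<theta> / 2)) \<cdot>\<^sub>m pauli_mat ps)"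
      using circ by (simp add: c_def)
  qed
qed

end
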